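(* Let $d$ be a positive integer and let $A \in \mathbb{R}^{[m]\times[n]}$. Suppose that for every vector $b\in\mathbb{R}^{[m]}$ the solution graph $G(R(A,b))$ is connected. If $m\le 3$ or $n\le 2$, then $A$ has an elimination ordering.
   Context: Fix a positive integer $d$ and let $D=\{0,1,\dots,d\}$; $[n]=\{1,\dots,n\}$. For $A\in\mathbb{R}^{[m]\times[n]}$ and $b\in\mathbb{R}^{[m]}$, $R(A,b)=\{x\in D^{[n]} : Ax\ge b\}$. For $R\subseteq D^{[n]}$, the solution graph $G(R)$ is the undirected graph with vertex set $R$ in which $x,y$ are adjacent iff they differ in exactly one coordinate. A matrix $A=(a_{ij})$ with column index set $J$ can be eliminated at column $j\in J$ if (i) for every row $i$ with $a_{ij}>0$ we have $a_{ij'}=0$ for all $j'\in J\setminus\{j\}$, or (ii) for every row $i$ with $a_{ij}<0$ we have $a_{ij'}=0$ for all $j'\in J\setminus\{j\}$. For $J'\subseteq[n]$, $\mathrm{elm}(A,J')$ is the submatrix of $A$ obtained by deleting the columns indexed by $J'$. A sequence $(j_1,\dots,j_n)$ of the elements of $[n]$ is an elimination ordering (EO) of $A$ if for every $t\in[n]$ the matrix $\mathrm{elm}(A,\{j_1,\dots,j_{t-1}\})$ can be eliminated at column $j_t$. *)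

theory Defs
  imports Complex_Main
begin

text \<open>Index sets are [m] = {1..m}, [n] = {1..n}. A matrix A in R^([m]x[n]) is a function
  A :: nat => nat => real, of which only the entries A i j with i in [m], j in [n] matter.
  Points of D^[n] are functions x :: nat => int with x j in {0..d} for j in [n] and
  x j = 0 (a canonical default) for j outside [n].\<close>

definition box :: "nat \<Rightarrow> nat \<Rightarrow> (nat \<Rightarrow> int) set" where
  "box d n = {x. (\<forall>j\<in>{1..n}. x j \<in> {0..int d}) \<and> (\<forall>j. j \<notin> {1..n} \<longrightarrow> x j = 0)}"

definition solset :: "nat \<Rightarrow> nat \<Rightarrow> nat \<Rightarrow> (nat \<Rightarrow> nat \<Rightarrow> real) \<Rightarrow> (nat \<Rightarrow> real)
    \<Rightarrow> (nat \<Rightarrow> int) set" where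
  "solset d m n A b = {x \<in> box d n. \<forall>i\<in>{1..m}. (\<Sum>j=1..n. A i j * of_int (x j)) \<ge> b i}"

definition adjacent :: "nat \<Rightarrow> (nat \<Rightarrow> int) \<Rightarrow> (nat \<Rightarrow> int) \<Rightarrow> bool" where
  "adjacent n x y \<longleftrightarrow> card {j\<in>{1..n}. x j \<noteq> y j} = 1"

text \<open>G(R) is connected: any two vertices are joined by a walk inside R.
  (The empty graph counts as connected.)\<close>
definition sol_graph_connected :: "nat \<Rightarrow> (nat \<Rightarrow> int) set \<Rightarrow> bool" where
  "sol_graph_connected n R \<longleftrightarrow>
     (\<forall>x\<in>R. \<forall>y\<in>R. (x, y) \<in> ({(u, v). u \<in> R \<and> v \<in> R \<and> adjacent n u v})\<^sup>*)"

definition can_elim :: "nat \<Rightarrow> (nat \<Rightarrow> nat \<Rightarrow> real) \<Rightarrow> nat set \<Rightarrow> nat \<Rightarrow> bool" where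
  "can_elim m A J j \<longleftrightarrow>
     (\<forall>i\<in>{1..m}. A i j > 0 \<longrightarrow> (\<forall>j'\<in>J - {j}. A i j' = 0)) \<or>
     (\<forall>i\<in>{1..m}. A i j < 0 \<longrightarrow> (\<forall>j'\<in>J - {j}. A i j' = 0))"

definition elimination_ordering :: "nat \<Rightarrow> nat \<Rightarrow> (nat \<Rightarrow> nat \<Rightarrow> real) \<Rightarrow> nat list \<Rightarrow> bool" where
  "elimination_ordering m n A js \<longleftrightarrow>
     distinct js \<and> set js = {1..n} \<and>
     (\<forall>t<n. can_elim m A ({1..n} - set (take t js)) (js ! t))"

end

theory Submission
  imports Defs
begin


definition slice :: "nat \<Rightarrow> nat \<Rightarrow> nat \<Rightarrow> (nat \<Rightarrow> nat \<Rightarrow> real) \<Rightarrow> (nat \<Rightarrow> real) \<Rightarrow> nat set \<Rightarrow> (nat \<Rightarrow> int) \<Rightarrow> (nat \<Rightarrow> int) set" where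
  "slice d m n A b J c = {x \<in> solset d m n A b. \<forall>k\<in>{1..n} - J. x k = c k}"

definition rowv :: "nat \<Rightarrow> (nat \<Rightarrow> nat \<Rightarrow> real) \<Rightarrow> nat \<Rightarrow> (nat \<Rightarrow> int) \<Rightarrow> real" where
  "rowv n A i x = (\<Sum>k=1..n. A i k * of_int (x k))"

lemma solset_rowv: "x \<in> solset d m n A b \<longleftrightarrow> x \<in> box d n \<and> (\<forall>i\<in>{1..m}. rowv n A i x \<ge> b i)"
  by (simp add: solset_def rowv_def)

lemma rowv_upd:
  assumes "j \<in> {1..n}"
  shows "rowv n A i (x(j := v)) = rowv n A i x + A i j * of_int (v - x j)"
proof -
  have f: "finite {1..n}" by simp
  have h1: "rowv n A i (x(j := v)) = A i j * of_int v + (\<Sum>k\<in>{1..n}-{j}. A i k * of_int ((x(j:=v)) k))"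
    unfolding rowv_def using sum.remove[OF f assms, of "\<lambda>k. A i k * of_int ((x(j:=v)) k)"] by simp
  have h2: "(\<Sum>k\<in>{1..n}-{j}. A i k * of_int ((x(j:=v)) k)) = (\<Sum>k\<in>{1..n}-{j}. A i k * of_int (x k))"
    by (rule sum.cong) auto
  have h3: "rowv n A i x = A i j * of_int (x j) + (\<Sum>k\<in>{1..n}-{j}. A i k * of_int (x k))"
    unfolding rowv_def using sum.remove[OF f assms, of "\<lambda>k. A i k * of_int (x k)"] by simp
  show ?thesis by (simp only: h1 h2 h3 of_int_diff) (simp add: algebra_simps)
qed

lemma adj_upd:
  assumes "adjacent n x y" "x \<in> box d n" "y \<in> box d n" "j \<in> {1..n}"
  shows "x(j:=v) = y(j:=v) \<or> adjacent n (x(j:=v)) (y(j:=v))"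
proof -
  let ?D = "{k\<in>{1..n}. x k \<noteq> y k}"
  have "card ?D = 1" using assms(1) by (simp add: adjacent_def)
  then obtain a where a: "?D = {a}" by (rule card_1_singletonE)
  have D': "{k\<in>{1..n}. (x(j:=v)) k \<noteq> (y(j:=v)) k} = ?D - {j}" by auto
  show ?thesis
  proof (cases "a = j")
    case True
    have "\<forall>k. (x(j:=v)) k = (y(j:=v)) k"
    proof
      fix k
      show "(x(j:=v)) k = (y(j:=v)) k"
      proof (cases "k \<in> {1..n}")
        case True
        then show ?thesis using a \<open>a = j\<close> by (cases "k = j") auto
      next
        case False
        then show ?thesis using assms(2,3) assms(4) by (auto simp: box_def)
      qed
    qed
    then show ?thesis by blast
  next
    case False
    then have "{k\<in>{1..n}. (x(j:=v)) k \<noteq> (y(j:=v)) k} = {a}" using D' a by auto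
    then show ?thesis by (simp add: adjacent_def)
  qed
qed



lemma proj_conn:
  assumes J: "J \<subseteq> {1..n}" and j: "j \<in> J" and v: "v \<in> {0..int d}"
    and H: "\<forall>i\<in>{1..m}. (\<forall>j'\<in>J-{j}. A i j' = 0) \<or> (\<forall>t\<in>{0..int d}. A i j * of_int t \<le> A i j * of_int v)"
    and conn: "sol_graph_connected n (slice d m n A b J c)"
  shows "sol_graph_connected n (slice d m n A b (J - {j}) (c(j:=v)))"
proof -
  let ?S = "slice d m n A b J c"
  let ?S' = "slice d m n A b (J - {j}) (c(j:=v))"
  let ?E = "{(u, w). u \<in> ?S \<and> w \<in> ?S \<and> adjacent n u w}"
  let ?E' = "{(u, w). u \<in> ?S' \<and> w \<in> ?S' \<and> adjacent n u w}"
  have jn: "j \<in> {1..n}" using J j by auto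
  have sub: "?S' \<subseteq> ?S"
  proof
    fix u assume "u \<in> ?S'"
    then show "u \<in> ?S" using j unfolding slice_def by auto
  qed
  have uj: "u j = v" if "u \<in> ?S'" for u using that jn unfolding slice_def by auto
  have proj: "x(j:=v) \<in> ?S'" if u0: "u0 \<in> ?S'" and x: "x \<in> ?S" for x u0
  proof -
    have xb: "x \<in> box d n" and xr: "\<forall>i\<in>{1..m}. rowv n A i x \<ge> b i" and xc: "\<forall>k\<in>{1..n} - J. x k = c k"
      using x unfolding slice_def solset_rowv by auto
    have ub: "u0 \<in> box d n" and ur: "\<forall>i\<in>{1..m}. rowv n A i u0 \<ge> b i" and uc: "\<forall>k\<in>{1..n} - (J-{j}). u0 k = (c(j:=v)) k"
      using u0 unfolding slice_def solset_rowv by auto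
    have xjr: "x j \<in> {0..int d}" using xb jn unfolding box_def by auto
    have b1: "x(j:=v) \<in> box d n" using xb v jn unfolding box_def by auto
    have b2: "rowv n A i (x(j:=v)) \<ge> b i" if i: "i \<in> {1..m}" for i
    proof (cases "\<forall>j'\<in>J-{j}. A i j' = 0")
      case True
      have "rowv n A i (x(j:=v)) = rowv n A i u0"
        unfolding rowv_def
      proof (rule sum.cong)
        fix k assume k: "k \<in> {1..n}"
        show "A i k * real_of_int ((x(j := v)) k) = A i k * real_of_int (u0 k)"
        proof (cases "k \<in> J")
          case True
          then show ?thesis using \<open>\<forall>j'\<in>J-{j}. A i j' = 0\<close> uc k by (cases "k = j") auto
        next
          case False
          then show ?thesis using xc uc k j by (cases "k = j") auto
        qed
      qed simp
      then show ?thesis using ur i by simp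
    next
      case False
      then have "A i j * of_int (x j) \<le> A i j * of_int v" using H i xjr by blast
      then have "rowv n A i (x(j:=v)) \<ge> rowv n A i x"
        using rowv_upd[OF jn, of A i x v] by (simp add: algebra_simps)
      then show ?thesis using xr i by force
    qed
    have b3: "\<forall>k\<in>{1..n} - (J-{j}). (x(j:=v)) k = (c(j:=v)) k" using xc by auto
    show ?thesis unfolding slice_def solset_rowv using b1 b2 b3 by auto
  qed
  show ?thesis
    unfolding sol_graph_connected_def
  proof (intro ballI)
    fix u w assume u: "u \<in> ?S'" and w: "w \<in> ?S'"
    have "(u, w) \<in> ?E\<^sup>*" using conn sub u w unfolding sol_graph_connected_def by blast
    then have "(u(j:=v), w(j:=v)) \<in> ?E'\<^sup>*"
    proof (induction rule: rtrancl_induct)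
      case base
      then show ?case by simp
    next
      case (step y z)
      have yz: "y \<in> ?S" "z \<in> ?S" "adjacent n y z" using step(2) by auto
      have py: "y(j:=v) \<in> ?S'" "z(j:=v) \<in> ?S'" using proj[OF u] yz by auto
      have "y \<in> box d n" "z \<in> box d n" using yz unfolding slice_def solset_rowv by auto
      then have "y(j:=v) = z(j:=v) \<or> adjacent n (y(j:=v)) (z(j:=v))"
        using adj_upd[OF yz(3) _ _ jn] by blast
      then show ?case
      proof
        assume "y(j:=v) = z(j:=v)"
        then show ?thesis using step(3) by simp
      next
        assume "adjacent n (y(j:=v)) (z(j:=v))"
        then have "(y(j:=v), z(j:=v)) \<in> ?E'" using py by auto
        with step(3) show ?thesis by (rule rtrancl_into_rtrancl)
      qed
    qed
    moreover have "u(j:=v) = u" "w(j:=v) = w" using uj[OF u] uj[OF w] by auto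
    ultimately show "(u, w) \<in> ?E'\<^sup>*" by simp
  qed
qed



definition wit :: "nat \<Rightarrow> (nat \<Rightarrow> nat \<Rightarrow> real) \<Rightarrow> (nat \<Rightarrow> int) \<Rightarrow> nat set \<Rightarrow> nat \<Rightarrow> bool" where
  "wit m A s T j \<longleftrightarrow> (\<exists>i\<in>{1..m}. of_int (s j) * A i j < 0 \<and> of_int (s j) * A i j < (\<Sum>k\<in>T. of_int (s k) * A i k))"

lemma disconn:
  assumes d: "d \<ge> 1" and J: "J \<subseteq> {1..n}" and c: "\<forall>k\<in>{1..n}-J. c k \<in> {0..int d}"
    and T: "T \<subseteq> J" "T \<noteq> {}" and s: "\<forall>k\<in>J. s k = 1 \<or> s k = -1"
    and W: "\<forall>j\<in>J. wit m A s T j"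
  shows "\<exists>b. \<not> sol_graph_connected n (slice d m n A b J c)"
proof -
  define p where "p = (\<lambda>k. if k \<in> J then (if s k = 1 then 0 else int d) else if k \<in> {1..n} then c k else 0)"
  define q where "q = (\<lambda>k. if k \<in> T then p k + s k else p k)"
  define b where "b = (\<lambda>i. min (rowv n A i p) (rowv n A i q))"
  let ?S = "slice d m n A b J c"
  let ?E = "{(u, w). u \<in> ?S \<and> w \<in> ?S \<and> adjacent n u w}"
  have Tn: "T \<subseteq> {1..n}" using T J by auto
  have pbox: "p \<in> box d n" using J c d unfolding box_def p_def by auto
  have qbox: "q \<in> box d n"
  proof -
    have "q k \<in> {0..int d}" if "k \<in> {1..n}" for k
    proof (cases "k \<in> T")
      case True
      then have "k \<in> J" using T by auto
      then show ?thesis using True s d unfolding q_def p_def by auto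
    next
      case False
      then show ?thesis using pbox that unfolding q_def box_def by auto
    qed
    moreover have "q k = 0" if "k \<notin> {1..n}" for k using that Tn pbox unfolding q_def box_def by auto
    ultimately show ?thesis unfolding box_def by auto
  qed
  have pS: "p \<in> ?S" using pbox unfolding slice_def solset_rowv b_def p_def by auto
  have qS: "q \<in> ?S"
  proof -
    have "\<forall>k\<in>{1..n}-J. q k = c k" using T unfolding q_def p_def by auto
    then show ?thesis using qbox unfolding slice_def solset_rowv b_def by auto
  qed
  have pq: "p \<noteq> q"
  proof
    assume "p = q"
    obtain k where k: "k \<in> T" using T by auto
    then have "s k \<noteq> 0" using s T by fastforce
    then have "q k \<noteq> p k" using k unfolding q_def by auto
    then show False using \<open>p = q\<close> by simp
  qed
  have diff: "rowv n A i q = rowv n A i p + (\<Sum>k\<in>T. of_int (s k) * A i k)" for i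
  proof -
    have "rowv n A i q - rowv n A i p = (\<Sum>k=1..n. A i k * of_int (q k - p k))"
      unfolding rowv_def by (simp add: sum_subtractf[symmetric] algebra_simps)
    also have "\<dots> = (\<Sum>k\<in>{1..n}. if k \<in> T then of_int (s k) * A i k else 0)"
      by (rule sum.cong) (auto simp: q_def)
    also have "\<dots> = (\<Sum>k\<in>{1..n} \<inter> T. of_int (s k) * A i k)"
      by (rule sum.inter_restrict[symmetric]) simp
    also have "{1..n} \<inter> T = T" using Tn by auto
    finally show ?thesis by simp
  qed
  have iso: "\<not> adjacent n p y" if y: "y \<in> ?S" for y
  proof
    assume adj: "adjacent n p y"
    let ?D = "{k\<in>{1..n}. p k \<noteq> y k}"
    have "card ?D = 1" using adj by (simp add: adjacent_def)
    then obtain j where jD: "?D = {j}" by (rule card_1_singletonE)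
    have jn: "j \<in> {1..n}" and pyj: "p j \<noteq> y j" using jD by auto
    have ybox: "y \<in> box d n" and yr: "\<forall>i\<in>{1..m}. rowv n A i y \<ge> b i" and yc: "\<forall>k\<in>{1..n}-J. y k = c k"
      using y unfolding slice_def solset_rowv by auto
    have jJ: "j \<in> J"
    proof (rule ccontr)
      assume "j \<notin> J"
      then have "y j = c j" "p j = c j" using yc jn unfolding p_def by auto
      then show False using pyj by metis
    qed
    have yeq: "y = p(j := y j)"
    proof
      fix k
      show "y k = (p(j := y j)) k"
      proof (cases "k \<in> {1..n}")
        case True
        have "k \<noteq> j \<Longrightarrow> p k = y k" using jD True by blast
        then show ?thesis by (cases "k = j") simp_all
      next
        case False
        then show ?thesis using ybox pbox jn unfolding box_def by auto
      qed
    qed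
    obtain i where i: "i \<in> {1..m}" and i1: "of_int (s j) * A i j < 0"
      and i2: "of_int (s j) * A i j < (\<Sum>k\<in>T. of_int (s k) * A i k)"
      using W jJ unfolding wit_def by blast
    have yjr: "y j \<in> {0..int d}" using ybox jn unfolding box_def by auto
    have key: "A i j * of_int (y j - p j) \<le> of_int (s j) * A i j"
    proof (cases "s j = 1")
      case True
      then have "p j = 0" using jJ unfolding p_def by auto
      then have "y j \<ge> 1" using yjr pyj by auto
      then have "of_int (y j) \<ge> (1::real)" by simp
      moreover have "A i j < 0" using i1 True by simp
      ultimately show ?thesis using True \<open>p j = 0\<close> by (simp add: mult_left_mono_neg)
    next
      case False
      then have sj: "s j = -1" using s jJ by auto
      then have "p j = int d" using jJ unfolding p_def by auto
      then have "y j - p j \<le> -1" using yjr pyj by auto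
      then have "of_int (y j - p j) \<le> (-1::real)" by simp
      moreover have "A i j > 0" using i1 sj by simp
      ultimately show ?thesis using sj
        by (metis mult.commute mult_left_mono mult_minus1 of_int_minus of_int_1 order_less_imp_le)
    qed
    have "rowv n A i y = rowv n A i p + A i j * of_int (y j - p j)"
      using rowv_upd[OF jn, of A i p "y j"] yeq by simp
    also have "\<dots> < b i"
      using key i1 i2 diff[of i] unfolding b_def by linarith
    finally show False using yr i by force
  qed
  have "\<not> sol_graph_connected n ?S"
  proof
    assume "sol_graph_connected n ?S"
    then have "(p, q) \<in> ?E\<^sup>*" using pS qS unfolding sol_graph_connected_def by blast
    then show False
    proof (cases rule: converse_rtranclE)
      case base
      then show ?thesis using pq by simp
    next
      case (step z)
      then show ?thesis using iso by auto
    qed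
  qed
  then show ?thesis by blast
qed



lemma nce: "\<not> can_elim m A J j \<longleftrightarrow> (\<exists>i\<in>{1..m}. A i j > 0 \<and> (\<exists>j'\<in>J-{j}. A i j' \<noteq> 0)) \<and> (\<exists>i\<in>{1..m}. A i j < 0 \<and> (\<exists>j'\<in>J-{j}. A i j' \<noteq> 0))"
  by (auto simp: can_elim_def)

lemma four_rows:
  fixes m a b c e :: nat
  assumes "m \<le> 3" "a \<in> {1..m}" "b \<in> {1..m}" "c \<in> {1..m}" "e \<in> {1..m}" "distinct [a,b,c,e]"
  shows False
proof -
  have "card {a,b,c,e} \<le> card {1..m}" by (rule card_mono) (use assms in auto)
  moreover have "card {a,b,c,e} = 4" using assms(6) by auto
  ultimately show False using assms(1) by simp
qed

lemma extW:
  assumes T: "T \<subseteq> J" and s: "\<forall>k\<in>T. s k = 1 \<or> s k = -1" and w: "\<forall>j\<in>T. wit m A s T j"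
    and rest: "\<forall>t\<in>J-T. \<exists>i\<in>{1..m}. A i t \<noteq> 0 \<and> 0 \<le> (\<Sum>k\<in>T. of_int (s k) * A i k)"
  shows "\<exists>s'. (\<forall>k\<in>J. s' k = 1 \<or> s' k = -1) \<and> (\<forall>j\<in>J. wit m A s' T j)"
proof -
  obtain f where f: "\<forall>t\<in>J-T. f t \<in> {1..m} \<and> A (f t) t \<noteq> 0 \<and> 0 \<le> (\<Sum>k\<in>T. of_int (s k) * A (f t) k)"
    using rest by metis
  define s' where "s' = (\<lambda>k. if k \<in> T then s k else if A (f k) k > 0 then -1 else (1::int))"
  have sum_eq: "(\<Sum>k\<in>T. of_int (s' k) * A i k) = (\<Sum>k\<in>T. of_int (s k) * A i k)" for i
    by (rule sum.cong) (auto simp: s'_def)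
  show ?thesis
  proof (intro exI conjI ballI)
    fix k assume "k \<in> J"
    show "s' k = 1 \<or> s' k = -1" using s by (auto simp: s'_def)
  next
    fix j assume j: "j \<in> J"
    show "wit m A s' T j"
    proof (cases "j \<in> T")
      case True
      then show ?thesis using w unfolding wit_def sum_eq by (simp add: s'_def)
    next
      case False
      then have fj: "f j \<in> {1..m}" "A (f j) j \<noteq> 0" "0 \<le> (\<Sum>k\<in>T. of_int (s k) * A (f j) k)"
        using f j by auto
      have "of_int (s' j) * A (f j) j < 0"
        using fj(2) False by (auto simp: s'_def)
      then show ?thesis unfolding wit_def sum_eq using fj by force
    qed
  qed
qed

lemma flipW:
  assumes m3: "m \<le> 3" and two: "\<forall>t\<in>J. \<exists>i1\<in>{1..m}. \<exists>i2\<in>{1..m}. i1 \<noteq> i2 \<and> A i1 t \<noteq> 0 \<and> A i2 t \<noteq> 0"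
    and T: "T \<subseteq> J" and s: "\<forall>k\<in>T. s k = 1 \<or> s k = -1" and w1: "\<forall>j\<in>T. wit m A s T j"
    and w2: "\<forall>j\<in>T. wit m A (\<lambda>k. - s k) T j"
  shows "\<exists>s'. (\<forall>k\<in>J. s' k = 1 \<or> s' k = -1) \<and> (\<forall>j\<in>J. wit m A s' T j)"
proof (cases "\<forall>t\<in>J-T. \<exists>i\<in>{1..m}. A i t \<noteq> 0 \<and> 0 \<le> (\<Sum>k\<in>T. of_int (s k) * A i k)")
  case True
  then show ?thesis using extW[OF T s w1] by blast
next
  case False
  then obtain t where t: "t \<in> J" and tn: "\<forall>i\<in>{1..m}. A i t \<noteq> 0 \<longrightarrow> (\<Sum>k\<in>T. of_int (s k) * A i k) < 0"
    by force
  show ?thesis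
  proof (cases "\<forall>t\<in>J-T. \<exists>i\<in>{1..m}. A i t \<noteq> 0 \<and> 0 \<le> (\<Sum>k\<in>T. of_int (- s k) * A i k)")
    case True
    have s2: "\<forall>k\<in>T. - s k = 1 \<or> - s k = -1" using s by auto
    show ?thesis using extW[of T J "\<lambda>k. - s k", OF T s2 w2 True] by blast
  next
    case False
    then obtain t' where t': "t' \<in> J" and tn': "\<forall>i\<in>{1..m}. A i t' \<noteq> 0 \<longrightarrow> (\<Sum>k\<in>T. of_int (- s k) * A i k) < 0"
      by force
    have neg: "(\<Sum>k\<in>T. of_int (- s k) * A i k) = - (\<Sum>k\<in>T. of_int (s k) * A i k)" for i
      by (simp add: sum_negf)
    obtain i1 i2 where i12: "i1 \<in> {1..m}" "i2 \<in> {1..m}" "i1 \<noteq> i2" "A i1 t \<noteq> 0" "A i2 t \<noteq> 0"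
      using two t by blast
    obtain i3 i4 where i34: "i3 \<in> {1..m}" "i4 \<in> {1..m}" "i3 \<noteq> i4" "A i3 t' \<noteq> 0" "A i4 t' \<noteq> 0"
      using two t' by blast
    have "(\<Sum>k\<in>T. of_int (s k) * A i1 k) < 0" "(\<Sum>k\<in>T. of_int (s k) * A i2 k) < 0"
      using tn i12 by auto
    moreover have "(\<Sum>k\<in>T. of_int (s k) * A i3 k) > 0" "(\<Sum>k\<in>T. of_int (s k) * A i4 k) > 0"
      using tn' i34 neg by force+
    ultimately have "distinct [i1,i2,i3,i4]" using i12 i34 by auto
    then show ?thesis using four_rows[OF m3 i12(1,2) i34(1,2)] by blast
  qed
qed

lemma pairW:
  assumes cond: "(m \<le> 3 \<and> (\<forall>t\<in>J. \<exists>i1\<in>{1..m}. \<exists>i2\<in>{1..m}. i1 \<noteq> i2 \<and> A i1 t \<noteq> 0 \<and> A i2 t \<noteq> 0)) \<or> J = {j,k}"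
    and jk: "j \<in> J" "k \<in> J" "j \<noteq> k" and r: "r \<in> {1..m}" "r' \<in> {1..m}"
    and pj: "A r j * A r' j < 0" and pk: "A r k * A r' k < 0"
  shows "\<exists>T s. T \<subseteq> J \<and> T \<noteq> {} \<and> (\<forall>k\<in>J. s k = 1 \<or> s k = -1) \<and> (\<forall>j\<in>J. wit m A s T j)"
proof -
  define s where "s = (\<lambda>x. if x = j then (if A r j < 0 then 1 else -1) else (if A r k > 0 then 1 else (-1::int)))"
  have s1: "of_int (s j) * A r j < 0" "of_int (s j) * A r' j > 0"
    using pj jk(3) by (auto simp: s_def mult_less_0_iff)
  have s2: "of_int (s k) * A r k > 0" "of_int (s k) * A r' k < 0"
    using pk jk(3) by (auto simp: s_def mult_less_0_iff)
  have ss: "\<forall>x\<in>{j,k}. s x = 1 \<or> s x = -1" by (auto simp: s_def)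
  have sum: "(\<Sum>x\<in>{j,k}. f x) = f j + f k" for f :: "nat \<Rightarrow> real" using jk(3) by simp
  have w1: "\<forall>x\<in>{j,k}. wit m A s {j,k} x"
  proof
    fix x assume "x \<in> {j,k}"
    then show "wit m A s {j,k} x"
    proof
      assume "x = j"
      then show ?thesis unfolding wit_def sum using r s1 s2 by (intro bexI[of _ r]) auto
    next
      assume "x \<in> {k}"
      then show ?thesis unfolding wit_def sum using r s1 s2 by (intro bexI[of _ r']) auto
    qed
  qed
  have w2: "\<forall>x\<in>{j,k}. wit m A (\<lambda>x. - s x) {j,k} x"
  proof
    fix x assume "x \<in> {j,k}"
    then show "wit m A (\<lambda>x. - s x) {j,k} x"
    proof
      assume "x = j"
      then show ?thesis unfolding wit_def sum using r s1 s2 by (intro bexI[of _ r']) auto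
    next
      assume "x \<in> {k}"
      then show ?thesis unfolding wit_def sum using r s1 s2 by (intro bexI[of _ r]) auto
    qed
  qed
  have T: "{j,k} \<subseteq> J" using jk by auto
  from cond show ?thesis
  proof
    assume c: "m \<le> 3 \<and> (\<forall>t\<in>J. \<exists>i1\<in>{1..m}. \<exists>i2\<in>{1..m}. i1 \<noteq> i2 \<and> A i1 t \<noteq> 0 \<and> A i2 t \<noteq> 0)"
    then show ?thesis using flipW[OF _ _ T ss w1 w2] T by blast
  next
    assume "J = {j,k}"
    then have "\<forall>t\<in>J-{j,k}. \<exists>i\<in>{1..m}. A i t \<noteq> 0 \<and> 0 \<le> (\<Sum>x\<in>{j,k}. of_int (s x) * A i x)" by simp
    then show ?thesis using extW[OF T ss w1] T by blast
  qed
qed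



lemma cycleW:
  assumes m3: "m \<le> 3" and two: "\<forall>t\<in>J. \<exists>i1\<in>{1..m}. \<exists>i2\<in>{1..m}. i1 \<noteq> i2 \<and> A i1 t \<noteq> 0 \<and> A i2 t \<noteq> 0"
    and jkl: "j \<in> J" "k \<in> J" "l \<in> J" "j \<noteq> k" "j \<noteq> l" "k \<noteq> l"
    and pqr: "p \<in> {1..m}" "q \<in> {1..m}" "r \<in> {1..m}"
    and a: "A p j > 0" "A q j < 0" "A p k \<noteq> 0" "A p l = 0" "A q l \<noteq> 0" "A q k = 0" "A r j = 0"
      "A r k * A p k < 0" "A r l * A q l < 0"
  shows "\<exists>T s. T \<subseteq> J \<and> T \<noteq> {} \<and> (\<forall>k\<in>J. s k = 1 \<or> s k = -1) \<and> (\<forall>j\<in>J. wit m A s T j)"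
proof -
  define s where "s = (\<lambda>x. if x = j then 1 else if x = k then (if A p k < 0 then 1 else -1) else (if A q l > 0 then 1 else (-1::int)))"
  have sj: "s j = 1" by (simp add: s_def)
  have sk: "of_int (s k) * A p k < 0" "of_int (s k) * A r k > 0"
    using a(3,8) jkl by (auto simp: s_def mult_less_0_iff)
  have sl: "of_int (s l) * A q l > 0" "of_int (s l) * A r l < 0"
    using a(5,9) jkl by (auto simp: s_def mult_less_0_iff)
  have ss: "\<forall>x\<in>{j,k,l}. s x = 1 \<or> s x = -1" by (auto simp: s_def)
  have sum: "(\<Sum>x\<in>{j,k,l}. f x) = f j + f k + f l" for f :: "nat \<Rightarrow> real" using jkl by simp
  have w1: "\<forall>x\<in>{j,k,l}. wit m A s {j,k,l} x"
  proof
    fix x assume x: "x \<in> {j,k,l}"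
    show "wit m A s {j,k,l} x"
    proof (cases "x = j")
      case True
      then show ?thesis unfolding wit_def sum using pqr sj sk sl a by (intro bexI[of _ q]) auto
    next
      case False
      show ?thesis
      proof (cases "x = k")
        case True
        then show ?thesis unfolding wit_def sum using pqr sj sk sl a by (intro bexI[of _ p]) auto
      next
        case False
        then have "x = l" using x \<open>x \<noteq> j\<close> by auto
        then show ?thesis unfolding wit_def sum using pqr sj sk sl a by (intro bexI[of _ r]) auto
      qed
    qed
  qed
  have w2: "\<forall>x\<in>{j,k,l}. wit m A (\<lambda>x. - s x) {j,k,l} x"
  proof
    fix x assume x: "x \<in> {j,k,l}"
    show "wit m A (\<lambda>x. - s x) {j,k,l} x"
    proof (cases "x = j")
      case True
      then show ?thesis unfolding wit_def sum using pqr sj sk sl a by (intro bexI[of _ p]) auto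
    next
      case False
      show ?thesis
      proof (cases "x = k")
        case True
        then show ?thesis unfolding wit_def sum using pqr sj sk sl a by (intro bexI[of _ r]) auto
      next
        case False
        then have "x = l" using x \<open>x \<noteq> j\<close> by auto
        then show ?thesis unfolding wit_def sum using pqr sj sk sl a by (intro bexI[of _ q]) auto
      qed
    qed
  qed
  have T: "{j,k,l} \<subseteq> J" using jkl by auto
  show ?thesis using flipW[OF m3 two T ss w1 w2] T by blast
qed

lemma stuck2:
  assumes Jn: "J \<subseteq> {1..n}" "n \<le> 2" and Jne: "J \<noteq> {}" and st: "\<forall>j\<in>J. \<not> can_elim m A J j"
  shows "\<exists>T s. T \<subseteq> J \<and> T \<noteq> {} \<and> (\<forall>k\<in>J. s k = 1 \<or> s k = -1) \<and> (\<forall>j\<in>J. wit m A s T j)"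
proof -
  obtain j where j: "j \<in> J" using Jne by auto
  then have "\<not> can_elim m A J j" using st by blast
  then obtain p k0 q l0 where p: "p \<in> {1..m}" "A p j > 0" "k0 \<in> J-{j}" "A p k0 \<noteq> 0"
    and q: "q \<in> {1..m}" "A q j < 0" "l0 \<in> J-{j}" "A q l0 \<noteq> 0"
    unfolding nce by blast
  have J2: "J = {j,k0}"
  proof
    show "J \<subseteq> {j,k0}"
    proof
      fix x assume x: "x \<in> J"
      show "x \<in> {j,k0}"
      proof (rule ccontr)
        assume "x \<notin> {j,k0}"
        then have "card {j,k0,x} = 3" using p(3) by auto
        moreover have "card {j,k0,x} \<le> card {1..n}"
          by (rule card_mono) (use Jn j p(3) x in auto)
        ultimately show False using Jn(2) by simp
      qed
    qed
  qed (use j p in auto)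
  have "l0 = k0" using q(3) J2 by auto
  have pqj: "A p j * A q j < 0" using p q by (simp add: mult_pos_neg)
  have P: "\<exists>T s. T \<subseteq> J \<and> T \<noteq> {} \<and> (\<forall>k\<in>J. s k = 1 \<or> s k = -1) \<and> (\<forall>j\<in>J. wit m A s T j)"
    if "r \<in> {1..m}" "r' \<in> {1..m}" "A r j * A r' j < 0" "A r k0 * A r' k0 < 0"
    for r r'
    using pairW[where m=m and J=J and A=A and j=j and k=k0 and r=r and r'=r'] that J2 j p by auto
  show ?thesis
  proof (cases "A p k0 * A q k0 < 0")
    case True
    then show ?thesis using P[of p q] p q pqj by auto
  next
    case False
    have "A p k0 * A q k0 \<noteq> 0" using p q \<open>l0 = k0\<close> by simp
    then have pqk: "A p k0 * A q k0 > 0" using False by linarith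
    have "k0 \<in> J" using p by auto
    then have "\<not> can_elim m A J k0" using st by blast
    then obtain r1 r2 where r1: "r1\<in>{1..m}" "A r1 k0 > 0" "\<exists>l\<in>J-{k0}. A r1 l \<noteq> 0"
      and r2: "r2\<in>{1..m}" "A r2 k0 < 0" "\<exists>l\<in>J-{k0}. A r2 l \<noteq> 0" unfolding nce by blast
    have Jk: "J - {k0} = {j}" using J2 p(3) by auto
    obtain h where h: "h \<in> {1..m}" "A h k0 * A p k0 < 0" "A h j \<noteq> 0"
    proof (cases "A p k0 > 0")
      case True
      then show ?thesis using that[of r2] r2 Jk by (auto simp: mult_neg_pos)
    next
      case False
      then have "A p k0 < 0" using p by auto
      then show ?thesis using that[of r1] r1 Jk by (auto simp: mult_pos_neg)
    qed
    have hq: "A h k0 * A q k0 < 0" using h(2) pqk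
      by (auto simp: mult_less_0_iff zero_less_mult_iff)
    show ?thesis
    proof (cases "A h j * A p j < 0")
      case True
      then show ?thesis using P[of h p] h p by auto
    next
      case False
      then have "A h j * A q j < 0" using h(3) p q by (auto simp: mult_less_0_iff)
      then show ?thesis using P[of h q] h q hq by auto
    qed
  qed
qed



lemma stuck3:
  assumes m3: "m \<le> 3" and Jne: "J \<noteq> {}" and st: "\<forall>j\<in>J. \<not> can_elim m A J j"
  shows "\<exists>T s. T \<subseteq> J \<and> T \<noteq> {} \<and> (\<forall>k\<in>J. s k = 1 \<or> s k = -1) \<and> (\<forall>j\<in>J. wit m A s T j)"
proof -
  have two: "\<forall>t\<in>J. \<exists>i1\<in>{1..m}. \<exists>i2\<in>{1..m}. i1 \<noteq> i2 \<and> A i1 t \<noteq> 0 \<and> A i2 t \<noteq> 0"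
  proof
    fix t assume "t \<in> J"
    then have "\<not> can_elim m A J t" using st by blast
    then obtain i1 i2 where "i1 \<in> {1..m}" "A i1 t > 0" "i2 \<in> {1..m}" "A i2 t < 0"
      unfolding nce by blast
    then show "\<exists>i1\<in>{1..m}. \<exists>i2\<in>{1..m}. i1 \<noteq> i2 \<and> A i1 t \<noteq> 0 \<and> A i2 t \<noteq> 0"
      by (intro bexI[of _ i1] bexI[of _ i2]) auto
  qed
  have P: "\<exists>T s. T \<subseteq> J \<and> T \<noteq> {} \<and> (\<forall>k\<in>J. s k = 1 \<or> s k = -1) \<and> (\<forall>j\<in>J. wit m A s T j)"
    if "j \<in> J" "k \<in> J" "j \<noteq> k" "r \<in> {1..m}" "r' \<in> {1..m}" "A r j * A r' j < 0" "A r k * A r' k < 0"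
    for j k r r'
    by (rule pairW[OF disjI1[OF conjI[OF m3 two]] that(1-7)])
  obtain j where j: "j \<in> J" using Jne by auto
  then have "\<not> can_elim m A J j" using st by blast
  then obtain p k0 q l0 where p: "p \<in> {1..m}" "A p j > 0" "k0 \<in> J-{j}" "A p k0 \<noteq> 0"
    and q: "q \<in> {1..m}" "A q j < 0" "l0 \<in> J-{j}" "A q l0 \<noteq> 0"
    unfolding nce by blast
  have pqj: "A p j * A q j < 0" using p q by (simp add: mult_pos_neg)
  have "p \<noteq> q" using p q by auto
  have opp: "\<exists>r\<in>{1..m}. A r t * x < 0 \<and> (\<exists>l\<in>J-{t}. A r l \<noteq> 0)" if "t \<in> J" "x \<noteq> 0" for t x
  proof -
    from that st have "\<not> can_elim m A J t" by blast
    then obtain r1 r2 where r1: "r1\<in>{1..m}" "A r1 t > 0" "\<exists>l\<in>J-{t}. A r1 l \<noteq> 0"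
      and r2: "r2\<in>{1..m}" "A r2 t < 0" "\<exists>l\<in>J-{t}. A r2 l \<noteq> 0" unfolding nce by blast
    show ?thesis
    proof (cases "x > 0")
      case True
      then show ?thesis using r2 by (intro bexI[of _ r2]) (auto simp: mult_neg_pos)
    next
      case False
      then have "x < 0" using that by auto
      then show ?thesis using r1 by (intro bexI[of _ r1]) (auto simp: mult_pos_neg)
    qed
  qed
  show ?thesis
  proof (cases "\<exists>k\<in>J-{j}. A p k \<noteq> 0 \<and> A q k \<noteq> 0")
    case True
    then obtain k where k: "k \<in> J-{j}" "A p k \<noteq> 0" "A q k \<noteq> 0" by blast
    show ?thesis
    proof (cases "A p k * A q k < 0")
      case True
      then show ?thesis using P[of j k p q] j k p q pqj by auto
    next
      case False
      have "A p k * A q k \<noteq> 0" using k by simp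
      then have pqk: "A p k * A q k > 0" using False by linarith
      obtain r where r: "r \<in> {1..m}" "A r k * A p k < 0" "\<exists>l\<in>J-{k}. A r l \<noteq> 0"
        using opp[of k "A p k"] k by blast
      have rq: "A r k * A q k < 0" using r(2) pqk
        by (auto simp: mult_less_0_iff zero_less_mult_iff)
      have "r \<noteq> p" using r(2) by (metis not_square_less_zero)
      have "r \<noteq> q" using rq by (metis not_square_less_zero)
      show ?thesis
      proof (cases "A r j = 0")
        case False
        show ?thesis
        proof (cases "A r j * A p j < 0")
          case True
          then show ?thesis using P[of j k r p] j k r p by auto
        next
          case False
          then have "A r j * A q j < 0" using \<open>A r j \<noteq> 0\<close> p q
            by (auto simp: mult_less_0_iff)
          then show ?thesis using P[of j k r q] j k r q rq by auto
        qed
      next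
        case True
        obtain l where l: "l \<in> J-{k}" "A r l \<noteq> 0" using r by blast
        obtain x where x: "x \<in> {1..m}" "A x l * A r l < 0" using opp[of l "A r l"] l by blast
        have "x \<noteq> r" using x(2) by (metis not_square_less_zero)
        have "x = p \<or> x = q"
        proof (rule ccontr)
          assume "\<not> (x = p \<or> x = q)"
          then have "distinct [p,q,r,x]" using \<open>p \<noteq> q\<close> \<open>r \<noteq> p\<close> \<open>r \<noteq> q\<close> \<open>x \<noteq> r\<close> by auto
          then show False using four_rows[OF m3 p(1) q(1) r(1) x(1)] by blast
        qed
        then have "A x k * A r k < 0" using r(2) rq by (auto simp: mult.commute)
        then show ?thesis using P[of k l x r] x l k r by auto
      qed
    qed
  next
    case False
    have qk0: "A q k0 = 0" using False p by auto
    have pl0: "A p l0 = 0" using False q by auto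
    have "k0 \<noteq> l0" using p(4) pl0 by auto
    obtain r where r: "r \<in> {1..m}" "A r k0 * A p k0 < 0" using opp[of k0 "A p k0"] p by blast
    obtain r' where r': "r' \<in> {1..m}" "A r' l0 * A q l0 < 0" using opp[of l0 "A q l0"] q by blast
    have "r \<noteq> p" using r(2) by (metis not_square_less_zero)
    have "r \<noteq> q" using r(2) qk0 by auto
    have "r' \<noteq> q" using r'(2) by (metis not_square_less_zero)
    have "r' \<noteq> p" using r'(2) pl0 by auto
    have "r = r'"
    proof (rule ccontr)
      assume "r \<noteq> r'"
      then have "distinct [p,q,r,r']" using \<open>p \<noteq> q\<close> \<open>r \<noteq> p\<close> \<open>r \<noteq> q\<close> \<open>r' \<noteq> p\<close> \<open>r' \<noteq> q\<close> by auto
      then show False using four_rows[OF m3 p(1) q(1) r(1) r'(1)] by blast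
    qed
    show ?thesis
    proof (cases "A r j = 0")
      case False
      show ?thesis
      proof (cases "A r j * A p j < 0")
        case True
        then show ?thesis using P[of j k0 r p] j p r by auto
      next
        case False
        then have "A r j * A q j < 0" using \<open>A r j \<noteq> 0\<close> p q
          by (auto simp: mult_less_0_iff)
        then show ?thesis using P[of j l0 r q] j q r r' \<open>r = r'\<close> by auto
      qed
    next
      case True
      show ?thesis
        using cycleW[OF m3 two, of j k0 l0 p q r] j p q r r' \<open>r = r'\<close> qk0 pl0 \<open>k0 \<noteq> l0\<close> True
        by (auto simp: mult.commute)
    qed
  qed
qed



lemma stuckW:
  assumes "m \<le> 3 \<or> n \<le> 2" "J \<subseteq> {1..n}" "J \<noteq> {}" "\<forall>j\<in>J. \<not> can_elim m A J j"
  shows "\<exists>T s. T \<subseteq> J \<and> T \<noteq> {} \<and> (\<forall>k\<in>J. s k = 1 \<or> s k = -1) \<and> (\<forall>j\<in>J. wit m A s T j)"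
  using assms stuck3[of m J A] stuck2[of J n m A] by blast

lemma greedy:
  assumes d: "d \<ge> 1" and mn: "m \<le> 3 \<or> n \<le> 2"
  shows "J \<subseteq> {1..n} \<Longrightarrow> \<forall>k\<in>{1..n}-J. c k \<in> {0..int d} \<Longrightarrow> \<forall>b. sol_graph_connected n (slice d m n A b J c)
    \<Longrightarrow> \<exists>js. distinct js \<and> set js = J \<and> (\<forall>t<card J. can_elim m A (J - set (take t js)) (js!t))"
proof (induction "card J" arbitrary: J c rule: less_induct)
  case less
  have finJ: "finite J" using less.prems(1) finite_subset by blast
  show ?case
  proof (cases "J = {}")
    case True
    then show ?thesis by (intro exI[of _ "[]"]) simp
  next
    case False
    show ?thesis
    proof (cases "\<exists>j\<in>J. can_elim m A J j")
      case True
      then obtain j where j: "j \<in> J" "can_elim m A J j" by blast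
      obtain v where v: "v \<in> {0..int d}"
        and H: "\<forall>i\<in>{1..m}. (\<forall>j'\<in>J-{j}. A i j' = 0) \<or> (\<forall>t\<in>{0..int d}. A i j * of_int t \<le> A i j * of_int v)"
      proof (cases "\<forall>i\<in>{1..m}. A i j > 0 \<longrightarrow> (\<forall>j'\<in>J - {j}. A i j' = 0)")
        case True
        have "\<forall>i\<in>{1..m}. (\<forall>j'\<in>J-{j}. A i j' = 0) \<or> (\<forall>t\<in>{0..int d}. A i j * of_int t \<le> A i j * of_int 0)"
        proof
          fix i assume i: "i \<in> {1..m}"
          show "(\<forall>j'\<in>J-{j}. A i j' = 0) \<or> (\<forall>t\<in>{0..int d}. A i j * of_int t \<le> A i j * of_int 0)"
          proof (cases "A i j > 0")
            case True
            then show ?thesis using \<open>\<forall>i\<in>{1..m}. A i j > 0 \<longrightarrow> _\<close> i by blast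
          next
            case False
            then show ?thesis by (auto intro: mult_nonpos_nonneg)
          qed
        qed
        then show ?thesis using that[of 0] by simp
      next
        case False
        then have F: "\<forall>i\<in>{1..m}. A i j < 0 \<longrightarrow> (\<forall>j'\<in>J - {j}. A i j' = 0)" using j(2) unfolding can_elim_def by blast
        have "\<forall>i\<in>{1..m}. (\<forall>j'\<in>J-{j}. A i j' = 0) \<or> (\<forall>t\<in>{0..int d}. A i j * of_int t \<le> A i j * of_int (int d))"
        proof
          fix i assume i: "i \<in> {1..m}"
          show "(\<forall>j'\<in>J-{j}. A i j' = 0) \<or> (\<forall>t\<in>{0..int d}. A i j * of_int t \<le> A i j * of_int (int d))"
          proof (cases "A i j < 0")
            case True
            then show ?thesis using F i by blast
          next
            case False
            then show ?thesis by (auto intro!: mult_left_mono)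
          qed
        qed
        then show ?thesis using that[of "int d"] by simp
      qed
      have conn': "\<forall>b. sol_graph_connected n (slice d m n A b (J - {j}) (c(j:=v)))"
        using proj_conn[OF less.prems(1) j(1) v H] less.prems(3) by blast
      have lt: "card (J - {j}) < card J" using finJ j(1) by (meson card_Diff1_less)
      have c': "\<forall>k\<in>{1..n}-(J-{j}). (c(j:=v)) k \<in> {0..int d}" using less.prems(2) v by auto
      obtain js where js: "distinct js" "set js = J - {j}"
        "\<forall>t<card (J-{j}). can_elim m A (J - {j} - set (take t js)) (js!t)"
        using less.hyps[OF lt, of "c(j:=v)"] less.prems(1) c' conn' by blast
      have cj: "card (J - {j}) = card J - 1" using finJ j(1) by simp
      show ?thesis
      proof (intro exI[of _ "j # js"] conjI allI impI)
        show "distinct (j # js)" using js by auto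
        show "set (j # js) = J" using js j by auto
        fix t assume t: "t < card J"
        show "can_elim m A (J - set (take t (j # js))) ((j # js) ! t)"
        proof (cases t)
          case 0
          then show ?thesis using j by simp
        next
          case (Suc t')
          then have "t' < card (J - {j})" using t cj by simp
          then have "can_elim m A (J - {j} - set (take t' js)) (js!t')" using js(3) by blast
          moreover have "J - set (take t (j # js)) = J - {j} - set (take t' js)" using Suc by auto
          ultimately show ?thesis using Suc by simp
        qed
      qed
    next
      case False
      then have st: "\<forall>j\<in>J. \<not> can_elim m A J j" by blast
      obtain T s where Ts: "T \<subseteq> J" "T \<noteq> {}" "\<forall>k\<in>J. s k = 1 \<or> s k = -1" "\<forall>j\<in>J. wit m A s T j"
        using stuckW[OF mn less.prems(1) \<open>J \<noteq> {}\<close> st] by blast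
      obtain b where "\<not> sol_graph_connected n (slice d m n A b J c)"
        using disconn[OF d less.prems(1,2) Ts] by blast
      then show ?thesis using less.prems(3) by blast
    qed
  qed
qed

theorem theorem2:
  fixes d m n :: nat and A :: "nat \<Rightarrow> nat \<Rightarrow> real"
  assumes "d \<ge> 1"
    and "\<forall>b :: nat \<Rightarrow> real. sol_graph_connected n (solset d m n A b)"
    and "m \<le> 3 \<or> n \<le> 2"
  shows "\<exists>js. elimination_ordering m n A js"
proof -
  have sl: "slice d m n A b {1..n} (\<lambda>_. 0) = solset d m n A b" for b
    unfolding slice_def by auto
  obtain js where "distinct js" "set js = {1..n}"
    "\<forall>t<card {1..n}. can_elim m A ({1..n} - set (take t js)) (js!t)"
    using greedy[OF assms(1,3), of "{1..n}" "\<lambda>_. 0" A] assms(2) sl by auto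
  then show ?thesis unfolding elimination_ordering_def by auto
qed

end
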